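(* Let $A\in\mathbb{R}^{n\times n}$ and consider $x_{k+1}=Ax_k$ on $\mathbb{R}^n$. Let $\xi\in\mathbb{R}^n$ and suppose that for every bounded set $P\subseteq\mathbb{R}^n$ there exists a positive integer $k$ with $A^k\xi\notin P$. Then $\lim_{k\to\infty}\|A^k\xi\|_2=\infty$; that is, for every bounded set $P\subseteq\mathbb{R}^n$ there exists $K\in\mathbb{Z}^+$ such that $A^k\xi\notin P$ for all $k\ge K$. *)

theory Defs
  imports "HOL-Analysis.Analysis"
begin

primrec matpow :: "real^'n^'n \<Rightarrow> nat \<Rightarrow> real^'n^'n" where
  "matpow A 0 = mat 1"
| "matpow A (Suc k) = A ** matpow A k"

end

theory Submission
  imports Defs "HOL-Computational_Algebra.Fundamental_Theorem_Algebra"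
begin


definition expdecay :: "(nat \<Rightarrow> complex) \<Rightarrow> bool" where
  "expdecay r \<longleftrightarrow> (\<exists>C \<theta>. 0 \<le> \<theta> \<and> \<theta> < 1 \<and> (\<forall>k. cmod (r k) \<le> C * \<theta>^k))"

definition good :: "(nat \<Rightarrow> complex) \<Rightarrow> bool" where
  "good y \<longleftrightarrow> (\<exists>F a r. finite F \<and> (\<forall>\<nu>\<in>F. cmod \<nu> = 1) \<and> expdecay r \<and>
      (\<forall>k. y k = (\<Sum>\<nu>\<in>F. a \<nu> * \<nu>^k) + r k))"

lemma C_nonneg: "\<forall>k. cmod (r k) \<le> C * \<theta>^k \<Longrightarrow> 0 \<le> C"
proof -
  assume "\<forall>k. cmod (r k) \<le> C * \<theta>^k"
  hence "cmod (r 0) \<le> C" by (metis mult_1_right power_0)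
  thus "0 \<le> C" by (rule order_trans[OF norm_ge_zero])
qed

lemma expdecay_bounded:
  assumes "expdecay r" shows "\<exists>B. \<forall>k. cmod (r k) \<le> B"
proof -
  obtain C \<theta> where h: "0 \<le> \<theta>" "\<theta> < 1" "\<forall>k. cmod (r k) \<le> C * \<theta>^k"
    using assms unfolding expdecay_def by blast
  have C0: "0 \<le> C" by (rule C_nonneg[OF h(3)])
  have "cmod (r k) \<le> C" for k
  proof -
    have "\<theta>^k \<le> 1" using h by (simp add: power_le_one)
    hence "C * \<theta>^k \<le> C" using C0 by (simp add: mult_left_le)
    moreover have "cmod (r k) \<le> C * \<theta>^k" using h(3) by blast
    ultimately show ?thesis by linarith
  qed
  thus ?thesis by blast
qed

lemma good_bounded:
  assumes "good y" shows "\<exists>B. \<forall>k. cmod (y k) \<le> B"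
proof -
  obtain F a r where h: "finite F" "\<forall>\<nu>\<in>F. cmod \<nu> = 1" "expdecay r"
      "\<forall>k. y k = (\<Sum>\<nu>\<in>F. a \<nu> * \<nu>^k) + r k"
    using assms unfolding good_def by blast
  obtain B where B: "\<forall>k. cmod (r k) \<le> B" using expdecay_bounded[OF h(3)] by blast
  have "cmod (y k) \<le> (\<Sum>\<nu>\<in>F. cmod (a \<nu>)) + B" for k
  proof -
    have "cmod (\<Sum>\<nu>\<in>F. a \<nu> * \<nu>^k) \<le> (\<Sum>\<nu>\<in>F. cmod (a \<nu> * \<nu>^k))" by (rule norm_sum)
    also have "\<dots> = (\<Sum>\<nu>\<in>F. cmod (a \<nu>))" using h(2) by (intro sum.cong) (auto simp: norm_mult norm_power)
    finally have "cmod (\<Sum>\<nu>\<in>F. a \<nu> * \<nu>^k) \<le> (\<Sum>\<nu>\<in>F. cmod (a \<nu>))" .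
    moreover have "y k = (\<Sum>\<nu>\<in>F. a \<nu> * \<nu>^k) + r k" "cmod (r k) \<le> B" using h(4) B by blast+
    ultimately show ?thesis using norm_triangle_ineq[of "\<Sum>\<nu>\<in>F. a \<nu> * \<nu>^k" "r k"]
      by simp
  qed
  thus ?thesis by blast
qed

lemma expdecay_add:
  assumes "expdecay r" "expdecay s" shows "expdecay (\<lambda>k. r k + s k)"
proof -
  obtain C \<theta> where h: "0 \<le> \<theta>" "\<theta> < 1" "\<forall>k. cmod (r k) \<le> C * \<theta>^k"
    using assms unfolding expdecay_def by blast
  obtain D \<eta> where g: "0 \<le> \<eta>" "\<eta> < 1" "\<forall>k. cmod (s k) \<le> D * \<eta>^k"
    using assms unfolding expdecay_def by blast
  have C0: "0 \<le> C" by (rule C_nonneg[OF h(3)])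
  have D0: "0 \<le> D" by (rule C_nonneg[OF g(3)])
  define m where "m = max \<theta> \<eta>"
  have "cmod (r k + s k) \<le> (C + D) * m^k" for k
  proof -
    have "\<theta>^k \<le> m^k" "\<eta>^k \<le> m^k" using h g by (auto simp: m_def intro!: power_mono)
    hence "C * \<theta>^k \<le> C * m^k" "D * \<eta>^k \<le> D * m^k" using C0 D0 by (auto intro: mult_left_mono)
    moreover have "cmod (r k) \<le> C * \<theta>^k" "cmod (s k) \<le> D * \<eta>^k" using h(3) g(3) by blast+
    ultimately show ?thesis using norm_triangle_ineq[of "r k" "s k"]
      by (simp add: distrib_right)
  qed
  moreover have "0 \<le> m" "m < 1" using h g by (auto simp: m_def)
  ultimately show ?thesis unfolding expdecay_def by blast
qed

lemma good_add_decay: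
  assumes "good y" "expdecay s" shows "good (\<lambda>k. y k + s k)"
proof -
  obtain F a r where h: "finite F" "\<forall>\<nu>\<in>F. cmod \<nu> = 1" "expdecay r"
      "\<forall>k. y k = (\<Sum>\<nu>\<in>F. a \<nu> * \<nu>^k) + r k"
    using assms unfolding good_def by blast
  show ?thesis unfolding good_def using h expdecay_add[OF h(3) assms(2)]
    by (intro exI[of _ F] exI[of _ a] exI[of _ "\<lambda>k. r k + s k"]) (simp add: add.assoc)
qed

lemma good_add_exp:
  assumes "good y" "cmod l = 1" shows "good (\<lambda>k. y k + c * l^k)"
proof -
  obtain F a r where h: "finite F" "\<forall>\<nu>\<in>F. cmod \<nu> = 1" "expdecay r"
      "\<forall>k. y k = (\<Sum>\<nu>\<in>F. a \<nu> * \<nu>^k) + r k"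
    using assms unfolding good_def by blast
  show ?thesis
  proof (cases "l \<in> F")
    case True
    define a' where "a' = a(l := a l + c)"
    have "(\<Sum>\<nu>\<in>F. a' \<nu> * \<nu>^k) = (\<Sum>\<nu>\<in>F. a \<nu> * \<nu>^k + (if \<nu> = l then c * l^k else 0))" for k
      by (intro sum.cong) (auto simp: a'_def algebra_simps)
    also have "\<dots> k = (\<Sum>\<nu>\<in>F. a \<nu> * \<nu>^k) + c * l^k" for k
      using True h(1) by (simp add: sum.distrib)
    finally have e: "\<And>k. (\<Sum>\<nu>\<in>F. a' \<nu> * \<nu>^k) = (\<Sum>\<nu>\<in>F. a \<nu> * \<nu>^k) + c * l^k" .
    have "\<forall>k. y k + c*l^k = (\<Sum>\<nu>\<in>F. a' \<nu> * \<nu>^k) + r k" using h(4) e by simp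
    then show ?thesis unfolding good_def using h(1,2,3)
      by (intro exI[of _ F] exI[of _ a'] exI[of _ r]) simp
  next
    case False
    define a' where "a' = a(l := c)"
    have e: "(\<Sum>\<nu>\<in>insert l F. a' \<nu> * \<nu>^k) = (\<Sum>\<nu>\<in>F. a \<nu> * \<nu>^k) + c * l^k" for k
      using False h(1) by (simp add: a'_def) (intro sum.cong, auto)
    have "\<forall>k. y k + c*l^k = (\<Sum>\<nu>\<in>insert l F. a' \<nu> * \<nu>^k) + r k" using h(4) e by simp
    then show ?thesis unfolding good_def using h(1,2,3) assms(2)
      by (intro exI[of _ "insert l F"] exI[of _ a'] exI[of _ r]) simp
  qed
qed



lemma decay_lt1:
  assumes rec: "\<forall>k. Y (Suc k) = l * Y k + r k" and l: "cmod l < 1"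
    and r: "0 \<le> \<theta>" "\<theta> < 1" "\<forall>k. cmod (r k) \<le> C * \<theta>^k"
  shows "expdecay Y"
proof -
  define \<beta> where "\<beta> = (1 + max \<theta> (cmod l))/2"
  have b: "cmod l < \<beta>" "\<theta> \<le> \<beta>" "\<beta> < 1" "0 \<le> \<beta>" using assms unfolding \<beta>_def by auto
  have C0: "0 \<le> C" by (rule C_nonneg[OF r(3)])
  define D where "D = cmod (Y 0) + C / (\<beta> - cmod l)"
  have CD: "C \<le> (\<beta> - cmod l) * D"
  proof -
    have "(\<beta> - cmod l) * D = (\<beta> - cmod l) * cmod (Y 0) + C" using b unfolding D_def by (simp add: field_simps)
    moreover have "0 \<le> (\<beta> - cmod l) * cmod (Y 0)" using b by simp
    ultimately show ?thesis by linarith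
  qed
  have key: "cmod (Y k) \<le> D * \<beta>^k" for k
  proof (induction k)
    case 0 show ?case using C0 b by (simp add: D_def)
  next
    case (Suc k)
    have "cmod (Y (Suc k)) \<le> cmod l * cmod (Y k) + cmod (r k)"
      using rec norm_triangle_ineq[of "l * Y k" "r k"] by (simp add: norm_mult)
    also have "\<dots> \<le> cmod l * (D * \<beta>^k) + C * \<beta>^k"
    proof -
      have "cmod (r k) \<le> C * \<theta>^k" using r(3) by blast
      also have "\<dots> \<le> C * \<beta>^k" using C0 b r(1) by (intro mult_left_mono power_mono) auto
      finally show ?thesis using Suc.IH by (intro add_mono mult_left_mono) auto
    qed
    also have "\<dots> = (cmod l * D + C) * \<beta>^k" by (simp add: algebra_simps)
    also have "\<dots> \<le> (\<beta> * D) * \<beta>^k" using CD b by (intro mult_right_mono) (auto simp: algebra_simps)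
    also have "\<dots> = D * \<beta>^(Suc k)" by simp
    finally show ?case .
  qed
  thus ?thesis using b unfolding expdecay_def by blast
qed

lemma rho_ge1:
  assumes l: "1 \<le> cmod l" and r: "0 \<le> \<theta>" "\<theta> < 1" "\<forall>k. cmod (r k) \<le> C * \<theta>^k"
  defines "\<rho> \<equiv> \<lambda>k. - (\<Sum>j. r (k+j) / l^(Suc j))"
  shows "\<forall>k. \<rho> (Suc k) = l * \<rho> k + r k" and "expdecay \<rho>"
proof -
  have l0: "l \<noteq> 0" using l by auto
  have bnd: "cmod (r (k+j) / l^(Suc j)) \<le> C * \<theta>^k * \<theta>^j" for k j
  proof -
    have "cmod (r (k+j) / l^(Suc j)) = cmod (r (k+j)) / cmod l ^ Suc j" by (simp add: norm_divide norm_power norm_mult)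
    also have "\<dots> \<le> cmod (r (k+j)) / 1"
    proof (rule divide_left_mono)
      show "1 \<le> cmod l ^ Suc j" using l by (rule one_le_power)
      thus "0 < cmod l ^ Suc j * 1" by simp
    qed simp
    also have "\<dots> = cmod (r (k+j))" by simp
    also have "\<dots> \<le> C * \<theta>^(k+j)" using r(3) by blast
    finally show ?thesis by (simp add: power_add mult.assoc)
  qed
  have sg: "summable (\<lambda>j. C * \<theta>^k * \<theta>^j)" for k
    using r by (intro summable_mult summable_geometric) auto
  have sm: "summable (\<lambda>j. r (k+j) / l^(Suc j))" for k
    by (rule summable_comparison_test'[OF sg[of k]]) (use bnd in auto)
  show "\<forall>k. \<rho> (Suc k) = l * \<rho> k + r k"
  proof
    fix k
    have "l * (\<Sum>j. r (k+j) / l^(Suc j)) = (\<Sum>j. l * (r (k+j) / l^(Suc j)))"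
      using sm[of k] by (rule suminf_mult[symmetric])
    also have "\<dots> = (\<Sum>j. r (k+j) / l^j)" using l0 by simp
    finally have e1: "l * (\<Sum>j. r (k+j) / l^(Suc j)) = (\<Sum>j. r (k+j) / l^j)" .
    have sm2: "summable (\<lambda>j. r (k+j) / l^j)"
      using summable_mult[OF sm[of k], of l] l0 by simp
    have "(\<Sum>j. r (k + Suc j) / l^(Suc j)) = (\<Sum>j. r (k+j) / l^j) - r k"
      using suminf_split_head[OF sm2] by simp
    thus "\<rho> (Suc k) = l * \<rho> k + r k" unfolding \<rho>_def using e1 by (simp add: algebra_simps)
  qed
  have "cmod (\<rho> k) \<le> C / (1 - \<theta>) * \<theta>^k" for k
  proof -
    have "cmod (\<rho> k) \<le> (\<Sum>j. C * \<theta>^k * \<theta>^j)"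
      unfolding \<rho>_def norm_minus_cancel by (rule norm_suminf_le[OF bnd sg])
    also have "\<dots> = C * \<theta>^k * (1 / (1 - \<theta>))"
      using r by (simp add: suminf_mult suminf_geometric)
    finally show ?thesis by simp
  qed
  thus "expdecay \<rho>" unfolding expdecay_def using r by blast
qed



lemma good_AP:
  assumes "finite F" "\<forall>\<nu>\<in>F. cmod \<nu> = 1"
  shows "good (\<lambda>k. (\<Sum>\<nu>\<in>F. b \<nu> * \<nu>^k))"
proof -
  have "expdecay (\<lambda>k. 0)" unfolding expdecay_def by (intro exI[of _ 0]) auto
  thus ?thesis unfolding good_def using assms
    by (intro exI[of _ F] exI[of _ b] exI[of _ "\<lambda>k. 0"]) simp
qed

lemma tends_inf_pow:
  assumes "1 < cmod l" "c \<noteq> 0" "\<forall>k. cmod (G k) \<le> B" "\<forall>k. y k = G k + c * l^k"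
  shows "\<forall>R. \<exists>K. \<forall>k\<ge>K. R < cmod (y k)"
proof
  fix R
  obtain K where K: "(R + B) / cmod c < cmod l ^ K" using real_arch_pow[OF assms(1)] by blast
  have "R < cmod (y k)" if "k \<ge> K" for k
  proof -
    have "cmod l ^ K \<le> cmod l ^ k" using that assms(1) by (intro power_increasing) auto
    hence "(R + B) / cmod c < cmod l ^ k" using K by linarith
    hence "R + B < cmod c * cmod l ^ k" using assms(2) by (simp add: divide_less_eq mult.commute)
    moreover have "cmod (c * l^k) \<le> cmod (y k) + cmod (G k)"
      using assms(4) norm_triangle_ineq4[of "y k" "G k"] by (metis add_diff_cancel_left')
    moreover have "cmod (G k) \<le> B" using assms(3) by blast
    ultimately show ?thesis by (simp add: norm_mult norm_power)
  qed
  thus "\<exists>K. \<forall>k\<ge>K. R < cmod (y k)" by blast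
qed

lemma tends_inf_lin:
  assumes "a \<noteq> 0" "\<forall>k. cmod (G k) \<le> B" "\<forall>k. y k = a * of_nat k * w k + G k" "\<forall>k. cmod (w k) = 1"
  shows "\<forall>R. \<exists>K. \<forall>k\<ge>K. R < cmod (y k)"
proof
  fix R
  obtain K :: nat where K: "(R + B) / cmod a < real K" using reals_Archimedean2 by blast
  have "R < cmod (y k)" if "k \<ge> K" for k
  proof -
    have "(R + B) / cmod a < real k" using K that by linarith
    hence "R + B < cmod a * real k" using assms(1) by (simp add: divide_less_eq mult.commute)
    moreover have "cmod (a * of_nat k * w k) \<le> cmod (y k) + cmod (G k)"
      using assms(3) norm_triangle_ineq4[of "y k" "G k"] by (metis add_diff_cancel_right')
    moreover have "cmod (G k) \<le> B" using assms(2) by blast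
    moreover have "cmod (a * of_nat k * w k) = cmod a * real k" using assms(4) by (simp add: norm_mult)
    ultimately show ?thesis by simp
  qed
  thus "\<exists>K. \<forall>k\<ge>K. R < cmod (y k)" by blast
qed

lemma step:
  assumes rec: "\<forall>k. y (Suc k) = l * y k + z k" and gz: "good z"
  shows "good y \<or> (\<forall>R. \<exists>K. \<forall>k\<ge>K. R < cmod (y k))"
proof -
  obtain F a r where h: "finite F" "\<forall>\<nu>\<in>F. cmod \<nu> = 1" "expdecay r"
      "\<forall>k. z k = (\<Sum>\<nu>\<in>F. a \<nu> * \<nu>^k) + r k"
    using gz unfolding good_def by blast
  obtain C \<theta> where r: "0 \<le> \<theta>" "\<theta> < 1" "\<forall>k. cmod (r k) \<le> C * \<theta>^k"
    using h(3) unfolding expdecay_def by blast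
  define AP where "AP k = (\<Sum>\<nu>\<in>F-{l}. a \<nu> / (\<nu> - l) * \<nu>^k)" for k
  define E where "E k = (if l \<in> F then a l * of_nat k * l^k / l else 0)" for k
  define Y where "Y k = y k - AP k - E k" for k
  have APrec: "AP (Suc k) = l * AP k + (\<Sum>\<nu>\<in>F-{l}. a \<nu> * \<nu>^k)" for k
  proof -
    have "AP (Suc k) = (\<Sum>\<nu>\<in>F-{l}. l * (a \<nu> / (\<nu> - l) * \<nu>^k) + a \<nu> * \<nu>^k)"
      unfolding AP_def by (intro sum.cong) (auto simp: field_simps)
    thus ?thesis unfolding AP_def by (simp add: sum.distrib sum_distrib_left)
  qed
  have Erec: "E (Suc k) = l * E k + (if l \<in> F then a l * l^k else 0)" for k
  proof (cases "l \<in> F")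
    case True
    hence "l \<noteq> 0" using h(2) by auto
    thus ?thesis using True unfolding E_def by (simp add: field_simps)
  qed (simp add: E_def)
  have split: "(\<Sum>\<nu>\<in>F. a \<nu> * \<nu>^k) = (\<Sum>\<nu>\<in>F-{l}. a \<nu> * \<nu>^k) + (if l \<in> F then a l * l^k else 0)" for k
  proof (cases "l \<in> F")
    case True thus ?thesis using sum.remove[OF h(1) True, of "\<lambda>\<nu>. a \<nu> * \<nu>^k"] by simp
  qed simp
  have Yrec: "\<forall>k. Y (Suc k) = l * Y k + r k"
  proof
    fix k
    show "Y (Suc k) = l * Y k + r k"
      unfolding Y_def using rec APrec[of k] Erec[of k] h(4) split[of k] by (simp add: algebra_simps)
  qed
  have gAP: "good AP" unfolding AP_def by (rule good_AP) (use h in auto)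
  consider (lt) "cmod l < 1" | (eq) "cmod l = 1" | (gt) "cmod l > 1" by linarith
  then show ?thesis
  proof cases
    case lt
    hence "l \<notin> F" using h(2) by auto
    hence E0: "E k = 0" for k by (simp add: E_def)
    have "expdecay Y" by (rule decay_lt1[OF Yrec lt r])
    moreover have "y = (\<lambda>k. AP k + Y k)" using E0 by (auto simp: Y_def)
    ultimately show ?thesis using good_add_decay[OF gAP] by auto
  next
    case eq
    define \<rho> where "\<rho> \<equiv> \<lambda>k. - (\<Sum>j. r (k+j) / l^(Suc j))"
    have \<rho>: "\<forall>k. \<rho> (Suc k) = l * \<rho> k + r k" "expdecay \<rho>"
      using rho_ge1[of l \<theta> r C] eq r unfolding \<rho>_def by auto
    define c where "c = Y 0 - \<rho> 0"
    have Y\<rho>: "Y k = \<rho> k + c * l^k" for k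
    proof (induction k)
      case 0 thus ?case by (simp add: c_def)
    next
      case (Suc k) thus ?case using Yrec \<rho>(1) by (simp add: algebra_simps)
    qed
    have yeq: "y k = E k + ((AP k + \<rho> k) + c * l^k)" for k using Y\<rho>[of k] unfolding Y_def by (simp add: diff_diff_eq diff_eq_eq add_ac)
    have gG: "good (\<lambda>k. (AP k + \<rho> k) + c * l^k)"
      by (rule good_add_exp[OF good_add_decay[OF gAP \<rho>(2)] eq])
    show ?thesis
    proof (cases "l \<in> F \<and> a l \<noteq> 0")
      case True
      obtain B where B: "\<forall>k. cmod ((AP k + \<rho> k) + c * l^k) \<le> B" using good_bounded[OF gG] by blast
      have "l \<noteq> 0" using eq by auto
      have "\<forall>k. y k = a l * of_nat k * (l^k / l) + ((AP k + \<rho> k) + c * l^k)"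
        using yeq True by (simp add: E_def)
      moreover have "\<forall>k. cmod (l^k / l) = 1" using eq by (simp add: norm_divide norm_power)
      ultimately have "\<forall>R. \<exists>K. \<forall>k\<ge>K. R < cmod (y k)"
        using tends_inf_lin[of "a l" "\<lambda>k. (AP k + \<rho> k) + c * l^k" B y "\<lambda>k. l^k / l"] True B by blast
      thus ?thesis by blast
    next
      case False
      hence "E k = 0" for k by (auto simp: E_def)
      hence "y = (\<lambda>k. (AP k + \<rho> k) + c * l^k)" using yeq by auto
      thus ?thesis using gG by simp
    qed
  next
    case gt
    define \<rho> where "\<rho> \<equiv> \<lambda>k. - (\<Sum>j. r (k+j) / l^(Suc j))"
    have \<rho>: "\<forall>k. \<rho> (Suc k) = l * \<rho> k + r k" "expdecay \<rho>"
      using rho_ge1[of l \<theta> r C] gt r unfolding \<rho>_def by auto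
    define c where "c = Y 0 - \<rho> 0"
    have Y\<rho>: "Y k = \<rho> k + c * l^k" for k
    proof (induction k)
      case 0 thus ?case by (simp add: c_def)
    next
      case (Suc k) thus ?case using Yrec \<rho>(1) by (simp add: algebra_simps)
    qed
    have "l \<notin> F" using h(2) gt by auto
    hence E0: "E k = 0" for k by (simp add: E_def)
    have yeq: "y k = (AP k + \<rho> k) + c * l^k" for k using Y\<rho>[of k] E0[of k] unfolding Y_def by (simp add: diff_eq_eq add_ac)
    have gG: "good (\<lambda>k. AP k + \<rho> k)" by (rule good_add_decay[OF gAP \<rho>(2)])
    show ?thesis
    proof (cases "c = 0")
      case True
      hence "y = (\<lambda>k. AP k + \<rho> k)" using yeq by auto
      thus ?thesis using gG by simp
    next
      case False
      obtain B where B: "\<forall>k. cmod (AP k + \<rho> k) \<le> B" using good_bounded[OF gG] by blast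
      show ?thesis using tends_inf_pow[OF gt False B] yeq by blast
    qed
  qed
qed



definition ra :: "complex poly \<Rightarrow> (nat \<Rightarrow> complex) \<Rightarrow> nat \<Rightarrow> complex" where
  "ra p y k = (\<Sum>i\<le>degree p. coeff p i * y (k+i))"

lemma ra_N: "degree p \<le> N \<Longrightarrow> ra p y k = (\<Sum>i\<le>N. coeff p i * y (k+i))"
  unfolding ra_def by (rule sum.mono_neutral_left) (auto simp: coeff_eq_0)

lemma ra_factor: "ra ([:-l,1:] * q) y k = ra q (\<lambda>k. y (Suc k) - l * y k) k"
proof -
  define d where "d = degree q"
  have pe: "[:-l,1:] * q = smult (-l) q + pCons 0 q" by simp
  have dg: "degree ([:-l,1:] * q) \<le> Suc d"
    using degree_mult_le[of "[:-l,1:]" q] by (simp add: d_def)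
  have "ra ([:-l,1:] * q) y k = (\<Sum>i\<le>Suc d. coeff ([:-l,1:] * q) i * y (k+i))"
    by (rule ra_N[OF dg])
  also have "\<dots> = (\<Sum>i\<le>Suc d. - l * (coeff q i * y (k+i))) + (\<Sum>i\<le>Suc d. coeff (pCons 0 q) i * y (k+i))"
  proof -
    have "coeff ([:-l,1:] * q) i * y (k+i) = - l * (coeff q i * y (k+i)) + coeff (pCons 0 q) i * y (k+i)" for i
      unfolding pe by (simp add: algebra_simps)
    thus ?thesis by (simp only: sum.distrib)
  qed
  also have "(\<Sum>i\<le>Suc d. - l * (coeff q i * y (k+i))) = - l * (\<Sum>i\<le>d. coeff q i * y (k+i))"
    by (simp add: sum_distrib_left d_def coeff_eq_0)
  also have "(\<Sum>i\<le>Suc d. coeff (pCons 0 q) i * y (k+i)) = (\<Sum>i\<le>d. coeff q i * y (Suc (k+i)))"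
    by (subst sum.atMost_Suc_shift) simp
  also have "- l * (\<Sum>i\<le>d. coeff q i * y (k+i)) + (\<Sum>i\<le>d. coeff q i * y (Suc (k+i)))
      = (\<Sum>i\<le>d. coeff q i * (y (Suc (k+i)) - l * y (k+i)))"
    by (simp add: sum_distrib_left sum.distrib[symmetric] algebra_simps sum_subtractf[symmetric])
  also have "\<dots> = ra q (\<lambda>k. y (Suc k) - l * y k) k" by (simp add: ra_def d_def)
  finally show ?thesis .
qed

lemma core:
  "p \<noteq> 0 \<Longrightarrow> \<forall>k. ra p y k = 0 \<Longrightarrow>
     good y \<or> (\<forall>R. \<exists>K. \<forall>k\<ge>K. \<exists>j\<le>degree p. R < cmod (y (k+j)))"
proof (induction "degree p" arbitrary: p y)
  case 0
  have c0: "coeff p 0 \<noteq> 0" using 0 by (metis leading_coeff_0_iff)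
  have "y k = 0" for k using "0.prems"(2) c0 unfolding ra_def by (simp flip: "0.hyps")
  hence "y = (\<lambda>k. (\<Sum>\<nu>\<in>{}. (\<lambda>_. 0) \<nu> * \<nu>^k))" by auto
  thus ?case using good_AP[of "{}"] by auto
next
  case (Suc n)
  have "\<not> constant (poly p)" using Suc.hyps constant_degree by (metis nat.distinct(1))
  then obtain l where "poly p l = 0" using fundamental_theorem_of_algebra by blast
  then obtain q where pq: "p = [:-l,1:] * q" using poly_eq_0_iff_dvd by (metis dvdE)
  have q0: "q \<noteq> 0" using Suc.prems(1) pq by auto
  have "degree p = degree [:-l,1:] + degree q" unfolding pq by (rule degree_mult_eq) (use q0 in auto)
  hence dq: "degree q = n" using Suc.hyps by simp
  define z where "z k = y (Suc k) - l * y k" for k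
  have zr: "\<forall>k. ra q z k = 0" using Suc.prems(2) unfolding pq ra_factor z_def by simp
  have IH: "good z \<or> (\<forall>R. \<exists>K. \<forall>k\<ge>K. \<exists>j\<le>n. R < cmod (z (k+j)))"
    using Suc.hyps(1)[OF dq[symmetric] q0 zr] dq by simp
  show ?case
  proof (cases "good z")
    case True
    have "\<forall>k. y (Suc k) = l * y k + z k" by (simp add: z_def)
    from step[OF this True] show ?thesis
    proof
      assume asm: "\<forall>R. \<exists>K. \<forall>k\<ge>K. R < cmod (y k)"
      have "\<exists>K. \<forall>k\<ge>K. \<exists>j\<le>degree p. R < cmod (y (k+j))" for R
      proof -
        obtain K where "\<forall>k\<ge>K. R < cmod (y k)" using asm by blast
        thus ?thesis by (intro exI[of _ K] allI impI exI[of _ 0]) simp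
      qed
      thus ?thesis by blast
    qed blast
  next
    case False
    with IH have W: "\<forall>R. \<exists>K. \<forall>k\<ge>K. \<exists>j\<le>n. R < cmod (z (k+j))" by blast
    have "\<exists>K. \<forall>k\<ge>K. \<exists>j\<le>degree p. R < cmod (y (k+j))" for R
    proof -
      define R0 where "R0 = max R 0"
      obtain K where K: "\<forall>k\<ge>K. \<exists>j\<le>n. R0 * (1 + cmod l) < cmod (z (k+j))" using spec[OF W, of "R0 * (1 + cmod l)"] by blast
      have "\<exists>j\<le>degree p. R < cmod (y (k+j))" if kK: "k \<ge> K" for k
      proof -
        obtain j where j: "j \<le> n" "R0 * (1 + cmod l) < cmod (z (k+j))" using K[rule_format, OF kK] by blast
        have "cmod (z (k+j)) \<le> cmod (y (Suc (k+j))) + cmod l * cmod (y (k+j))"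
          unfolding z_def using norm_triangle_ineq4[of "y (Suc (k+j))" "l * y (k+j)"] by (simp add: norm_mult)
        hence "R0 < cmod (y (k + Suc j)) \<or> R0 < cmod (y (k+j))"
        proof -
          assume a: "cmod (z (k+j)) \<le> cmod (y (Suc (k+j))) + cmod l * cmod (y (k+j))"
          show ?thesis
          proof (rule ccontr)
            assume "\<not> ?thesis"
            hence b: "cmod (y (Suc (k + j))) \<le> R0" "cmod (y (k+j)) \<le> R0" by auto
            have "cmod l * cmod (y (k+j)) \<le> cmod l * R0" using b(2) by (simp add: mult_left_mono)
            moreover have "R0 * (1 + cmod l) = R0 + cmod l * R0" by (simp add: algebra_simps)
            ultimately show False using a b(1) j(2) by linarith
          qed
        qed
        moreover have j1: "Suc j \<le> degree p" "j \<le> degree p" using j(1) Suc.hyps by auto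
        moreover have RR: "R \<le> R0" by (simp add: R0_def)
        ultimately show ?thesis
        proof (elim disjE)
          assume "R0 < cmod (y (k + Suc j))"
          hence "R < cmod (y (k + Suc j))" using RR by linarith
          thus ?thesis using j1(1) by blast
        next
          assume "R0 < cmod (y (k + j))"
          hence "R < cmod (y (k + j))" using RR by linarith
          thus ?thesis using j1(2) by blast
        qed
      qed
      thus ?thesis by blast
    qed
    thus ?thesis by blast
  qed
qed



lemma matpow_add: "matpow A (k + i) = matpow A k ** matpow A i"
  by (induction k) (auto simp: matrix_mul_assoc)

lemma mv_sum: "finite S \<Longrightarrow> M *v (\<Sum>i\<in>S. f i) = (\<Sum>i\<in>S. M *v f i)"
  for M :: "real^'n^'m"
  by (induction S rule: finite_induct) (auto simp: matrix_vector_right_distrib)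

lemma exists_rec:
  fixes x :: "nat \<Rightarrow> real^'n"
  assumes sh: "\<forall>k i. x (k+i) = matpow A k *v x i"
  shows "\<exists>N c. (\<exists>i\<le>N. c i \<noteq> 0) \<and> (\<forall>k. (\<Sum>i\<le>N. c i *\<^sub>R x (k+i)) = 0)"
proof -
  define N where "N = DIM(real^'n)"
  have "\<exists>c. (\<exists>i\<le>N. c i \<noteq> 0) \<and> (\<Sum>i\<le>N. c i *\<^sub>R x i) = 0"
  proof (cases "inj_on x {..N}")
    case True
    define S where "S = x ` {..N}"
    have cS: "card S = Suc N" unfolding S_def using card_image[OF True] by simp
    have fS: "finite S" unfolding S_def by simp
    have "dependent S"
    proof (rule ccontr)
      assume "\<not> dependent S"
      hence "card S \<le> DIM(real^'n)" using independent_bound by blast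
      thus False using cS N_def by simp
    qed
    then obtain u where u: "\<exists>v\<in>S. u v \<noteq> 0" "(\<Sum>v\<in>S. u v *\<^sub>R v) = 0"
      using real_vector.dependent_finite[OF fS] by blast
    have "(\<Sum>i\<le>N. u (x i) *\<^sub>R x i) = (\<Sum>v\<in>S. u v *\<^sub>R v)"
      unfolding S_def by (simp add: sum.reindex[OF True])
    moreover have "\<exists>i\<le>N. u (x i) \<noteq> 0" using u(1) unfolding S_def by auto
    ultimately show ?thesis using u(2) by (intro exI[of _ "\<lambda>i. u (x i)"]) auto
  next
    case False
    then obtain i j where ij: "i \<le> N" "j \<le> N" "i \<noteq> j" "x i = x j"
      unfolding inj_on_def by auto
    define c where "c m = (if m = i then 1 else if m = j then -1 else (0::real))" for m
    have "c m *\<^sub>R x m = (if m = i then x i else 0) + (if m = j then - x j else 0)" for m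
      using ij(3) by (auto simp: c_def)
    hence "(\<Sum>m\<le>N. c m *\<^sub>R x m) = (\<Sum>m\<le>N. (if m = i then x i else 0)) + (\<Sum>m\<le>N. (if m = j then - x j else 0))"
      by (simp add: sum.distrib)
    also have "\<dots> = 0" using ij by simp
    finally show ?thesis using ij by (intro exI[of _ c]) (auto simp: c_def)
  qed
  then obtain c where c: "\<exists>i\<le>N. c i \<noteq> 0" "(\<Sum>i\<le>N. c i *\<^sub>R x i) = 0" by blast
  have "(\<Sum>i\<le>N. c i *\<^sub>R x (k+i)) = 0" for k
  proof -
    have "(\<Sum>i\<le>N. c i *\<^sub>R x (k+i)) = (\<Sum>i\<le>N. matpow A k *v (c i *\<^sub>R x i))"
      using sh by (simp add: matrix_vector_mult_scaleR)
    also have "\<dots> = matpow A k *v (\<Sum>i\<le>N. c i *\<^sub>R x i)" by (simp add: mv_sum)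
    finally show ?thesis using c(2) by simp
  qed
  thus ?thesis using c(1) by blast
qed



theorem lemma5:
  fixes A :: "real^'n^'n" and \<xi> :: "real^'n"
  assumes "\<forall>P :: (real^'n) set. bounded P \<longrightarrow> (\<exists>k::nat. k > 0 \<and> matpow A k *v \<xi> \<notin> P)"
  shows "\<forall>P :: (real^'n) set. bounded P \<longrightarrow> (\<exists>K::nat. K > 0 \<and> (\<forall>k\<ge>K. matpow A k *v \<xi> \<notin> P))"
proof (rule ccontr)
  define x where "x k = matpow A k *v \<xi>" for k
  have sh: "\<forall>k i. x (k+i) = matpow A k *v x i"
  proof (intro allI)
    fix k i
    show "x (k+i) = matpow A k *v x i"
      unfolding x_def matpow_add by (rule matrix_vector_mul_assoc[symmetric])
  qed
  assume neg: "\<not> ?thesis"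
  obtain P :: "(real^'n) set" where Pb: "bounded P" and nP: "\<not> (\<exists>K::nat. K > 0 \<and> (\<forall>k\<ge>K. matpow A k *v \<xi> \<notin> P))"
    using neg by (meson)
  have inf: "\<forall>K>0. \<exists>k\<ge>K. x k \<in> P"
  proof (intro allI impI)
    fix K :: nat assume "K > 0"
    hence "\<not> (\<forall>k\<ge>K. matpow A k *v \<xi> \<notin> P)" using nP by blast
    thus "\<exists>k\<ge>K. x k \<in> P" unfolding x_def by blast
  qed
  obtain R where R: "\<forall>v\<in>P. norm v \<le> R" using Pb bounded_iff by blast
  have inf2: "\<exists>k\<ge>K. norm (x k) \<le> R" for K
  proof -
    obtain k where "k \<ge> Suc K" "x k \<in> P" using inf by blast
    thus ?thesis using R by (intro exI[of _ k]) auto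
  qed
  have unb: "\<exists>k. B < norm (x k)" for B
  proof -
    have "bounded (cball (0::real^'n) B)" by simp
    then obtain k where "x k \<notin> cball 0 B" using assms unfolding x_def by blast
    hence "B < norm (x k)" by (simp add: mem_cball_0 not_le)
    thus ?thesis by blast
  qed
  have "\<exists>m. \<forall>B. \<exists>k. B < \<bar>x k $ m\<bar>"
  proof (rule ccontr)
    assume "\<not> ?thesis"
    hence "\<forall>m. \<exists>B. \<forall>k. \<bar>x k $ m\<bar> \<le> B" by (meson not_le)
    then obtain Bf where Bf: "\<forall>m. \<forall>k. \<bar>x k $ m\<bar> \<le> Bf m" by (metis choice)
    obtain k where k: "(\<Sum>m\<in>UNIV. Bf m) < norm (x k)" using unb by blast
    have "norm (x k) \<le> (\<Sum>m\<in>UNIV. \<bar>x k $ m\<bar>)" by (rule norm_le_l1_cart)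
    also have "\<dots> \<le> (\<Sum>m\<in>UNIV. Bf m)" using Bf by (intro sum_mono) auto
    finally show False using k by simp
  qed
  then obtain m where m: "\<forall>B. \<exists>k. B < \<bar>x k $ m\<bar>" by blast
  obtain N c where c: "\<exists>i\<le>N. c i \<noteq> 0" "\<forall>k. (\<Sum>i\<le>N. c i *\<^sub>R x (k+i)) = 0"
    using exists_rec[OF sh] by blast
  define p :: "complex poly" where "p = (\<Sum>i\<le>N. monom (complex_of_real (c i)) i)"
  have cp: "coeff p i = (if i \<le> N then complex_of_real (c i) else 0)" for i
    unfolding p_def by (simp add: coeff_sum coeff_monom)
  have p0: "p \<noteq> 0"
  proof
    assume "p = 0"
    thus False using c(1) cp by (metis coeff_0 of_real_eq_0_iff)
  qed
  have dp: "degree p \<le> N" by (rule degree_le) (simp add: cp)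
  define y where "y k = complex_of_real (x k $ m)" for k
  have ry: "\<forall>k. ra p y k = 0"
  proof
    fix k
    have "ra p y k = (\<Sum>i\<le>N. coeff p i * y (k+i))" by (rule ra_N[OF dp])
    also have "\<dots> = complex_of_real (\<Sum>i\<le>N. c i * (x (k+i) $ m))" by (simp add: cp y_def)
    also have "(\<Sum>i\<le>N. c i * (x (k+i) $ m)) = (\<Sum>i\<le>N. c i *\<^sub>R x (k+i)) $ m"
      by (simp add: sum_component)
    also have "\<dots> = 0" using c(2) by simp
    finally show "ra p y k = 0" by simp
  qed
  have ng: "\<not> good y"
  proof
    assume "good y"
    then obtain B where "\<forall>k. cmod (y k) \<le> B" using good_bounded by blast
    moreover obtain k where "B < \<bar>x k $ m\<bar>" using m by blast
    ultimately show False unfolding y_def by (metis norm_of_real not_le)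
  qed
  have W: "\<forall>R. \<exists>K. \<forall>k\<ge>K. \<exists>j\<le>degree p. R < cmod (y (k+j))"
    using core[OF p0 ry] ng by blast
  have "\<forall>j. \<exists>K>0. \<forall>v. norm (matpow A j *v v) \<le> norm v * K"
    using bounded_linear.pos_bounded[OF matrix_vector_mul_bounded_linear] by blast
  then obtain Kf where Kf: "\<forall>j. Kf j > 0 \<and> (\<forall>v. norm (matpow A j *v v) \<le> norm v * Kf j)"
    by (metis choice)
  define M where "M = (\<Sum>j\<le>degree p. Kf j)"
  have KM: "Kf j \<le> M" if "j \<le> degree p" for j
    unfolding M_def using that Kf by (intro member_le_sum) (auto intro: less_imp_le)
  define R0 where "R0 = max R 0"
  obtain K where K: "\<forall>k\<ge>K. \<exists>j\<le>degree p. R0 * M < cmod (y (k+j))"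
    using spec[OF W, of "R0 * M"] by blast
  obtain k where k: "k \<ge> K" "norm (x k) \<le> R" using inf2 by blast
  obtain j where j: "j \<le> degree p" "R0 * M < cmod (y (k+j))" using K k(1) by blast
  have "cmod (y (k+j)) = \<bar>x (k+j) $ m\<bar>" by (simp add: y_def)
  also have "\<dots> \<le> norm (x (k+j))" by (rule component_le_norm_cart)
  also have "x (k+j) = matpow A j *v x k" using sh by (metis add.commute)
  also have "norm (matpow A j *v x k) \<le> norm (x k) * Kf j" using Kf by blast
  also have "\<dots> \<le> R0 * M"
    using k(2) KM[OF j(1)] Kf by (intro mult_mono) (auto simp: R0_def less_imp_le)
  finally show False using j(2) by simp
qed

end
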